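(* Let $I$ be a non-degenerate interval, $f:I\to\mathbb{R}$ continuous and $y\in I$. (i) If $y$ is not an $\mathsf{M}$-point of $f$, then either $\overline{D}^+f(y)=+\infty$ and $\underline{D}^-f(y)=-\infty$, or $\overline{D}^-f(y)=+\infty$ and $\underline{D}^+f(y)=-\infty$. (ii) If $\underline{D}^-f(y)=-\infty$ and $\underline{D}^+_{ap}f(y)=+\infty$, then $y$ is not an $\mathsf{M}$-point of $f$.
   Context: $\overline{D}^+f(y)=\limsup_{t\to y+}\frac{f(t)-f(y)}{t-y}$, and $\underline{D}^+,\overline{D}^-,\underline{D}^-$ are the other Dini derivatives. The approximate lower right Dini derivative is $\underline{D}^+_{ap}f(y)=\sup\{t:\lim_{\delta\to0+}\delta^{-1}\lambda(\{s\in(y,y+\delta):\frac{f(s)-f(y)}{s-y}\ge t\})=1\}$ ($\lambda$ Lebesgue measure). With $\psi(x)=(x,f(x))$, $y$ is an $\mathsf{M}$-point of $f$ if there are $c\ge1$ and $\varepsilon>0$ with $|\psi(x)-\psi(y)|\le c|\psi(x)-\psi(z)|$ for all $x\in I\cap(y-\varepsilon,y)$, $z\in I\cap(y,y+\varepsilon)$. *)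

theory Defs
  imports "HOL-Analysis.Analysis"
begin

definition dini_upper_right :: "real set \<Rightarrow> (real \<Rightarrow> real) \<Rightarrow> real \<Rightarrow> ereal" where
  "dini_upper_right I f y =
     Limsup (at y within (I \<inter> {y<..})) (\<lambda>t. ereal ((f t - f y) / (t - y)))"

definition dini_lower_right :: "real set \<Rightarrow> (real \<Rightarrow> real) \<Rightarrow> real \<Rightarrow> ereal" where
  "dini_lower_right I f y =
     Liminf (at y within (I \<inter> {y<..})) (\<lambda>t. ereal ((f t - f y) / (t - y)))"

definition dini_upper_left :: "real set \<Rightarrow> (real \<Rightarrow> real) \<Rightarrow> real \<Rightarrow> ereal" where
  "dini_upper_left I f y =
     Limsup (at y within (I \<inter> {..<y})) (\<lambda>t. ereal ((f t - f y) / (t - y)))"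

definition dini_lower_left :: "real set \<Rightarrow> (real \<Rightarrow> real) \<Rightarrow> real \<Rightarrow> ereal" where
  "dini_lower_left I f y =
     Liminf (at y within (I \<inter> {..<y})) (\<lambda>t. ereal ((f t - f y) / (t - y)))"

definition ap_dini_lower_right :: "real set \<Rightarrow> (real \<Rightarrow> real) \<Rightarrow> real \<Rightarrow> ereal" where
  "ap_dini_lower_right I f y =
     Sup (ereal ` {t. ((\<lambda>\<delta>. measure lebesgue
              {s \<in> I \<inter> {y<..<y+\<delta>}. (f s - f y) / (s - y) \<ge> t} / \<delta>)
            \<longlongrightarrow> 1) (at_right 0)})"

text \<open>M-point, with \<psi>(x) = (x, f x) in the Euclidean plane (the product metric on
  real \<times> real is the Euclidean one).\<close>

definition M_point :: "real set \<Rightarrow> (real \<Rightarrow> real) \<Rightarrow> real \<Rightarrow> bool" where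
  "M_point I f y \<longleftrightarrow>
     (\<exists>c\<ge>1. \<exists>\<epsilon>>0. \<forall>x \<in> I \<inter> {y-\<epsilon><..<y}. \<forall>z \<in> I \<inter> {y<..<y+\<epsilon>}.
        dist (x, f x) (y, f y) \<le> c * dist (x, f x) (z, f z))"

end

theory Submission
  imports Defs
begin

lemma Limsup_infty_I:
  fixes g :: "real \<Rightarrow> ereal"
  assumes "\<And>B d. d > 0 \<Longrightarrow> \<exists>t\<in>S. t \<noteq> y \<and> dist t y < d \<and> ereal B < g t"
  shows "Limsup (at y within S) g = \<infinity>"
proof (rule ccontr)
  assume "Limsup (at y within S) g \<noteq> \<infinity>"
  then obtain B where B: "Limsup (at y within S) g < ereal B"
  proof (cases "Limsup (at y within S) g")
    case (real r)
    then show ?thesis by (intro that[of "r + 1"]) auto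
  qed (auto intro: that[of 0])
  have "eventually (\<lambda>t. g t < ereal B) (at y within S)"
    using Limsup_lessD[OF B] .
  then obtain d where d: "d > 0" "\<forall>t\<in>S. t \<noteq> y \<and> dist t y < d \<longrightarrow> g t < ereal B"
    unfolding eventually_at by blast
  from assms[OF d(1), of B] obtain t where "t \<in> S" "t \<noteq> y" "dist t y < d" "ereal B < g t" by blast
  with d(2) show False by force
qed

lemma Liminf_minfty_I:
  fixes g :: "real \<Rightarrow> ereal"
  assumes "\<And>B d. d > 0 \<Longrightarrow> \<exists>t\<in>S. t \<noteq> y \<and> dist t y < d \<and> g t < ereal B"
  shows "Liminf (at y within S) g = -\<infinity>"
proof (rule ccontr)
  assume "Liminf (at y within S) g \<noteq> -\<infinity>"
  then obtain B where B: "ereal B < Liminf (at y within S) g"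
  proof (cases "Liminf (at y within S) g")
    case (real r)
    then show ?thesis by (intro that[of "r - 1"]) auto
  qed (auto intro: that[of 0])
  have "eventually (\<lambda>t. ereal B < g t) (at y within S)"
    using less_LiminfD[OF B] .
  then obtain d where d: "d > 0" "\<forall>t\<in>S. t \<noteq> y \<and> dist t y < d \<longrightarrow> ereal B < g t"
    unfolding eventually_at by blast
  from assms[OF d(1), of B] obtain t where "t \<in> S" "t \<noteq> y" "dist t y < d" "g t < ereal B" by blast
  with d(2) show False by force
qed

lemma Liminf_minfty_D:
  fixes g :: "real \<Rightarrow> ereal"
  assumes "Liminf (at y within S) g = -\<infinity>" "d > 0"
  shows "\<exists>t\<in>S. t \<noteq> y \<and> dist t y < d \<and> g t < ereal B"
proof (rule ccontr)
  assume "\<not> ?thesis"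
  then have "\<forall>t\<in>S. t \<noteq> y \<and> dist t y < d \<longrightarrow> ereal B \<le> g t" by (auto simp: not_less)
  then have ev: "eventually (\<lambda>t. ereal B \<le> g t) (at y within S)"
    unfolding eventually_at using assms(2) by blast
  have "ereal (B - 1) \<le> Liminf (at y within S) g"
    unfolding le_Liminf_iff
  proof (intro allI impI)
    fix z assume "z < ereal (B - 1)"
    moreover have "ereal (B - 1) < ereal B" by simp
    ultimately have "z < ereal B" by (rule order.strict_trans)
    then show "eventually (\<lambda>x. z < g x) (at y within S)"
      using ev by (auto elim: eventually_mono)
  qed
  with assms(1) show False by simp
qed

lemma dist_psi_bounds:
  fixes f :: "real \<Rightarrow> real"
  shows "\<bar>a - b\<bar> \<le> dist (a, f a) (b, f b)"
    and "\<bar>f a - f b\<bar> \<le> dist (a, f a) (b, f b)"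
    and "dist (a, f a) (b, f b) \<le> \<bar>a - b\<bar> + \<bar>f a - f b\<bar>"
proof -
  show "\<bar>a - b\<bar> \<le> dist (a, f a) (b, f b)"
    using dist_fst_le[of "(a, f a)" "(b, f b)"] by (simp add: dist_real_def)
  show "\<bar>f a - f b\<bar> \<le> dist (a, f a) (b, f b)"
    using dist_snd_le[of "(a, f a)" "(b, f b)"] by (simp add: dist_real_def)
  have "dist (a, f a) (b, f b) \<le> dist (a, f a) (b, f a) + dist (b, f a) (b, f b)"
    by (rule dist_triangle)
  also have "\<dots> = \<bar>a - b\<bar> + \<bar>f a - f b\<bar>"
    by (simp add: dist_Pair_Pair dist_real_def)
  finally show "dist (a, f a) (b, f b) \<le> \<bar>a - b\<bar> + \<bar>f a - f b\<bar>" .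
qed

lemma key_arith:
  fixes c D p q A e :: real
  assumes c: "c > 2" and p: "p > 0" and q: "q > 0"
    and cp: "c * p < D" and cq: "c * q < D" and ce: "c * \<bar>e\<bar> < D" and D: "D \<le> p + \<bar>A\<bar>"
  shows "A > 0 \<Longrightarrow> A / p > c - 1 \<and> (A + e) / q > c - 2"
    and "A < 0 \<Longrightarrow> A / p < -(c - 1) \<and> (A + e) / q < -(c - 2)"
    and "A \<noteq> 0"
proof -
  have "c * D \<le> c * p + c * \<bar>A\<bar>" using D c by (metis distrib_left less_eq_real_def mult_left_mono order.strict_trans zero_less_numeral)
  then have cA: "c * \<bar>A\<bar> > (c - 1) * D" using cp by (simp add: algebra_simps)
  have A1: "\<bar>A\<bar> > (c - 1) * p"
  proof -
    have "(c - 1) * (c * p) < (c - 1) * D" using cp c by (intro mult_strict_left_mono) auto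
    then have "c * ((c - 1) * p) < c * \<bar>A\<bar>" using cA by (simp add: algebra_simps)
    then show ?thesis using c by simp
  qed
  have A2: "\<bar>A\<bar> - \<bar>e\<bar> > (c - 2) * q"
  proof -
    have "(c - 2) * (c * q) < (c - 2) * D" using cq c by (intro mult_strict_left_mono) auto
    also have "\<dots> \<le> c * \<bar>A\<bar> - c * \<bar>e\<bar>" using cA ce by (simp add: algebra_simps)
    finally have "c * ((c - 2) * q) < c * (\<bar>A\<bar> - \<bar>e\<bar>)" by (simp add: algebra_simps)
    then show ?thesis using c by simp
  qed
  have "(c - 1) * p > 0" using c p by simp
  then show "A \<noteq> 0" using A1 by auto
  show "A > 0 \<Longrightarrow> A / p > c - 1 \<and> (A + e) / q > c - 2"
  proof -
    assume "A > 0"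
    then have "A > (c - 1) * p" "A + e > (c - 2) * q" using A1 A2 by auto
    then show ?thesis using p q by (simp add: pos_less_divide_eq)
  qed
  show "A < 0 \<Longrightarrow> A / p < -(c - 1) \<and> (A + e) / q < -(c - 2)"
  proof -
    assume "A < 0"
    then have "A < (-(c - 1)) * p" "A + e < (-(c - 2)) * q" using A1 A2 by (auto simp: algebra_simps)
    then show ?thesis using p q pos_divide_less_eq by metis
  qed
qed
lemma witness_quot:
  fixes f :: "real \<Rightarrow> real"
  assumes c: "c > 2" and xy: "x < y" and yz: "y < z"
    and W: "dist (x, f x) (y, f y) > c * dist (x, f x) (z, f z)"
  shows "f x > f y \<Longrightarrow> (f x - f y) / (x - y) < -(c - 1) \<and> (f z - f y) / (z - y) > c - 2"
    and "f x < f y \<Longrightarrow> (f x - f y) / (x - y) > c - 1 \<and> (f z - f y) / (z - y) < -(c - 2)"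
    and "f x \<noteq> f y"
proof -
  define D where "D = dist (x, f x) (y, f y)"
  define E where "E = dist (x, f x) (z, f z)"
  have E1: "z - x \<le> E" "\<bar>f x - f z\<bar> \<le> E" using dist_psi_bounds[where a=x and b=z and f=f] yz xy by (auto simp: E_def)
  have D3: "D \<le> (y - x) + \<bar>f x - f y\<bar>" using dist_psi_bounds(3)[where a=x and b=y and f=f] xy by (simp add: D_def)
  have W': "c * E < D" using W by (simp add: D_def E_def)
  have cE: "c * (y - x) \<le> c * E" "c * (z - y) \<le> c * E" "c * \<bar>f z - f x\<bar> \<le> c * E"
    using E1 c xy yz by (auto intro!: mult_left_mono)
  note K = key_arith[OF c _ _ _ _ _ D3, of "z - y" "f z - f x"]
  have h: "c * (y - x) < D" "c * (z - y) < D" "c * \<bar>f z - f x\<bar> < D" using cE W' by linarith+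
  have yx: "y - x > 0" "z - y > 0" using xy yz by auto
  have e: "f x - f y + (f z - f x) = f z - f y" by simp
  show "f x \<noteq> f y" using K(3)[OF yx h] by simp
  show "f x > f y \<Longrightarrow> (f x - f y) / (x - y) < -(c - 1) \<and> (f z - f y) / (z - y) > c - 2"
  proof -
    assume "f x > f y"
    then have "(f x - f y) / (y - x) > c - 1 \<and> (f z - f y) / (z - y) > c - 2"
      using K(1)[OF yx h] e by simp
    moreover have "(f x - f y) / (x - y) = - ((f x - f y) / (y - x))"
      by (simp add: minus_divide_right)
    ultimately show ?thesis by linarith
  qed
  show "f x < f y \<Longrightarrow> (f x - f y) / (x - y) > c - 1 \<and> (f z - f y) / (z - y) < -(c - 2)"
  proof -
    assume "f x < f y"
    then have "(f x - f y) / (y - x) < -(c - 1) \<and> (f z - f y) / (z - y) < -(c - 2)"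
      using K(2)[OF yx h] e by simp
    moreover have "(f x - f y) / (x - y) = - ((f x - f y) / (y - x))"
      by (simp add: minus_divide_right)
    ultimately show ?thesis by linarith
  qed
qed


theorem lemma3p1:
  fixes I :: "real set" and f :: "real \<Rightarrow> real" and y :: real
  assumes "is_interval I" and "\<exists>a\<in>I. \<exists>b\<in>I. a < b"
    and "continuous_on I f" and "y \<in> I"
  shows "(\<not> M_point I f y \<longrightarrow>
            (dini_upper_right I f y = \<infinity> \<and> dini_lower_left I f y = -\<infinity>) \<or>
            (dini_upper_left I f y = \<infinity> \<and> dini_lower_right I f y = -\<infinity>))
       \<and> (dini_lower_left I f y = -\<infinity> \<and> ap_dini_lower_right I f y = \<infinity>
            \<longrightarrow> \<not> M_point I f y)"
proof (intro conjI impI)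
  have Iint: "\<And>a b x. a \<in> I \<Longrightarrow> b \<in> I \<Longrightarrow> a \<le> x \<Longrightarrow> x \<le> b \<Longrightarrow> x \<in> I"
    using assms(1) unfolding is_interval_1 by blast
  define Dp where "Dp = (\<lambda>x z. dist (x, f x) (z, f z))"
  {
    assume nM: "\<not> M_point I f y"
    have wit: "\<exists>x\<in>I. \<exists>z\<in>I. y - \<epsilon> < x \<and> x < y \<and> y < z \<and> z < y + \<epsilon> \<and> Dp x y > c * Dp x z"
      if "c \<ge> 1" "\<epsilon> > 0" for c \<epsilon>
    proof -
      from nM that have "\<not> (\<forall>x \<in> I \<inter> {y-\<epsilon><..<y}. \<forall>z \<in> I \<inter> {y<..<y+\<epsilon>}.
        dist (x, f x) (y, f y) \<le> c * dist (x, f x) (z, f z))" unfolding M_point_def by blast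
      then show ?thesis unfolding Dp_def by (auto simp: not_le) blast
    qed
    define Wp where "Wp = (\<lambda>c \<epsilon>. \<exists>x\<in>I. \<exists>z\<in>I. y - \<epsilon> < x \<and> x < y \<and> y < z \<and> z < y + \<epsilon> \<and> Dp x y > c * Dp x z \<and> f x > f y)"
    define Wn where "Wn = (\<lambda>c \<epsilon>. \<exists>x\<in>I. \<exists>z\<in>I. y - \<epsilon> < x \<and> x < y \<and> y < z \<and> z < y + \<epsilon> \<and> Dp x y > c * Dp x z \<and> f x < f y)"
    show "(dini_upper_right I f y = \<infinity> \<and> dini_lower_left I f y = -\<infinity>) \<or>
            (dini_upper_left I f y = \<infinity> \<and> dini_lower_right I f y = -\<infinity>)"
    proof (cases "\<forall>c>2. \<forall>\<epsilon>>0. Wp c \<epsilon>")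
      case True
      have "dini_upper_right I f y = \<infinity>"
        unfolding dini_upper_right_def
      proof (rule Limsup_infty_I)
        fix B d :: real assume d: "d > 0"
        define c where "c = max 3 (B + 3)"
        have c: "c > 2" unfolding c_def by auto
        then obtain x z where xz: "x \<in> I" "z \<in> I" "y - d < x" "x < y" "y < z" "z < y + d"
          "Dp x y > c * Dp x z" "f x > f y"
          using True d unfolding Wp_def by blast
        have q: "(f z - f y) / (z - y) > c - 2"
          using witness_quot(1)[OF c xz(4) xz(5)] xz(7,8) unfolding Dp_def by blast
        have "B < (f z - f y) / (z - y)" using q unfolding c_def by linarith
        then show "\<exists>t\<in>I \<inter> {y<..}. t \<noteq> y \<and> dist t y < d \<and> ereal B < ereal ((f t - f y) / (t - y))"
          using xz by (intro bexI[of _ z]) (auto simp: dist_real_def)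
      qed
      moreover have "dini_lower_left I f y = -\<infinity>"
        unfolding dini_lower_left_def
      proof (rule Liminf_minfty_I)
        fix B d :: real assume d: "d > 0"
        define c where "c = max 3 (\<bar>B\<bar> + 3)"
        have c: "c > 2" unfolding c_def by auto
        then obtain x z where xz: "x \<in> I" "z \<in> I" "y - d < x" "x < y" "y < z" "z < y + d"
          "Dp x y > c * Dp x z" "f x > f y"
          using True d unfolding Wp_def by blast
        have q: "(f x - f y) / (x - y) < -(c - 1)"
          using witness_quot(1)[OF c xz(4) xz(5)] xz(7,8) unfolding Dp_def by blast
        have "(f x - f y) / (x - y) < B" using q unfolding c_def by linarith
        then show "\<exists>t\<in>I \<inter> {..<y}. t \<noteq> y \<and> dist t y < d \<and> ereal ((f t - f y) / (t - y)) < ereal B"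
          using xz by (intro bexI[of _ x]) (auto simp: dist_real_def)
      qed
      ultimately show ?thesis by blast
    next
      case False
      then obtain c0 \<epsilon>0 where c0: "c0 > 2" "\<epsilon>0 > 0" "\<not> Wp c0 \<epsilon>0" by blast
      have Wn: "Wn c \<epsilon>" if c: "c > 2" and e: "\<epsilon> > 0" for c \<epsilon>
      proof -
        define c' where "c' = max c c0"
        define e' where "e' = min \<epsilon> \<epsilon>0"
        have "c' \<ge> 1" "e' > 0" using c e c0 unfolding c'_def e'_def by auto
        from wit[OF this] obtain x z where xz: "x \<in> I" "z \<in> I" "y - e' < x" "x < y" "y < z" "z < y + e'"
          "Dp x y > c' * Dp x z" by blast
        have Dn: "Dp x z \<ge> 0" unfolding Dp_def by simp
        have "c * Dp x z \<le> c' * Dp x z" "c0 * Dp x z \<le> c' * Dp x z"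
          using Dn unfolding c'_def by (auto intro: mult_right_mono)
        then have h1: "Dp x y > c * Dp x z" and h0: "Dp x y > c0 * Dp x z" using xz(7) by linarith+
        have ne: "f x \<noteq> f y" using witness_quot(3)[OF c xz(4) xz(5)] h1 unfolding Dp_def by blast
        have "\<not> f x > f y"
        proof
          assume "f x > f y"
          then have "Wp c0 \<epsilon>0" unfolding Wp_def using xz h0 unfolding e'_def
            by (intro bexI[of _ x] bexI[of _ z]) auto
          with c0 show False by blast
        qed
        with ne have "f x < f y" by linarith
        then show ?thesis unfolding Wn_def using xz h1 unfolding e'_def
          by (intro bexI[of _ x] bexI[of _ z]) auto
      qed
      have "dini_upper_left I f y = \<infinity>"
        unfolding dini_upper_left_def
      proof (rule Limsup_infty_I)
        fix B d :: real assume d: "d > 0"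
        define c where "c = max 3 (B + 3)"
        have c: "c > 2" unfolding c_def by auto
        then obtain x z where xz: "x \<in> I" "z \<in> I" "y - d < x" "x < y" "y < z" "z < y + d"
          "Dp x y > c * Dp x z" "f x < f y"
          using Wn d unfolding Wn_def by blast
        have q: "(f x - f y) / (x - y) > c - 1"
          using witness_quot(2)[OF c xz(4) xz(5)] xz(7,8) unfolding Dp_def by blast
        have "B < (f x - f y) / (x - y)" using q unfolding c_def by linarith
        then show "\<exists>t\<in>I \<inter> {..<y}. t \<noteq> y \<and> dist t y < d \<and> ereal B < ereal ((f t - f y) / (t - y))"
          using xz by (intro bexI[of _ x]) (auto simp: dist_real_def)
      qed
      moreover have "dini_lower_right I f y = -\<infinity>"
        unfolding dini_lower_right_def
      proof (rule Liminf_minfty_I)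
        fix B d :: real assume d: "d > 0"
        define c where "c = max 3 (\<bar>B\<bar> + 3)"
        have c: "c > 2" unfolding c_def by auto
        then obtain x z where xz: "x \<in> I" "z \<in> I" "y - d < x" "x < y" "y < z" "z < y + d"
          "Dp x y > c * Dp x z" "f x < f y"
          using Wn d unfolding Wn_def by blast
        have q: "(f z - f y) / (z - y) < -(c - 2)"
          using witness_quot(2)[OF c xz(4) xz(5)] xz(7,8) unfolding Dp_def by blast
        have "(f z - f y) / (z - y) < B" using q unfolding c_def by linarith
        then show "\<exists>t\<in>I \<inter> {y<..}. t \<noteq> y \<and> dist t y < d \<and> ereal ((f t - f y) / (t - y)) < ereal B"
          using xz by (intro bexI[of _ z]) (auto simp: dist_real_def)
      qed
      ultimately show ?thesis by blast
    qed
  }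
  assume LL: "dini_lower_left I f y = -\<infinity> \<and> ap_dini_lower_right I f y = \<infinity>"
  show "\<not> M_point I f y"
  proof
    assume "M_point I f y"
    then obtain c \<epsilon> where c: "c \<ge> 1" and e: "\<epsilon> > 0" and
      H: "\<And>x z. x \<in> I \<inter> {y-\<epsilon><..<y} \<Longrightarrow> z \<in> I \<inter> {y<..<y+\<epsilon>} \<Longrightarrow> Dp x y \<le> c * Dp x z"
      unfolding M_point_def Dp_def by blast
    define G where "G = (\<lambda>t \<delta>. {s \<in> I \<inter> {y<..<y+\<delta>}. (f s - f y) / (s - y) \<ge> t})"
    have "Sup (ereal ` {t. ((\<lambda>\<delta>. measure lebesgue (G t \<delta>) / \<delta>) \<longlongrightarrow> 1) (at_right 0)}) = top" (is "Sup ?A = _")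
      using LL unfolding ap_dini_lower_right_def G_def top_ereal_def by simp
    then have "\<exists>i\<in>?A. ereal (4*c+1) < i"
    proof -
      assume Stop: "Sup ?A = top"
      have "\<forall>x<top. \<exists>i\<in>ereal ` {t. ((\<lambda>\<delta>. measure lebesgue (G t \<delta>) / \<delta>) \<longlongrightarrow> 1) (at_right 0)}. x < i"
        using Stop unfolding Sup_eq_top_iff .
      moreover have "ereal (4*c+1) < top" by (simp add: top_ereal_def)
      ultimately show ?thesis by blast
    qed
    then obtain t where tlim: "((\<lambda>\<delta>. measure lebesgue (G t \<delta>) / \<delta>) \<longlongrightarrow> 1) (at_right 0)"
      and tc: "4*c+1 < t" by auto
    have "eventually (\<lambda>\<delta>. measure lebesgue (G t \<delta>) / \<delta> > 1/2) (at_right 0)"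
      using order_tendstoD(1)[OF tlim, of "1/2"] by simp
    then obtain \<delta>0 where d0: "\<delta>0 > 0" and D0: "\<And>\<delta>. 0 < \<delta> \<Longrightarrow> \<delta> < \<delta>0 \<Longrightarrow> measure lebesgue (G t \<delta>) / \<delta> > 1/2"
      unfolding eventually_at_right_field by auto
    have tpos: "t > 0" using tc c by linarith
    define \<eta> where "\<eta> = t * min \<delta>0 \<epsilon> / 2"
    have eta: "\<eta> > 0" unfolding \<eta>_def using tpos d0 e by simp
    obtain \<rho> where rho: "\<rho> > 0" and R: "\<And>x'. x' \<in> I \<Longrightarrow> dist x' y < \<rho> \<Longrightarrow> dist (f x') (f y) < \<eta>"
      using assms(3) assms(4) eta unfolding continuous_on_iff by metis
    define M where "M = 2 * c + 1"
    have "min \<rho> \<epsilon> > 0" using rho e by simp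
    from Liminf_minfty_D[OF LL[THEN conjunct1, unfolded dini_lower_left_def] this, of "-M"]
    obtain x where x: "x \<in> I" "x < y" "dist x y < min \<rho> \<epsilon>" and qx: "(f x - f y) / (x - y) < - M"
      by auto
    define a where "a = f x - f y"
    define h where "h = y - x"
    have hpos: "h > 0" using x unfolding h_def by simp
    have "(f x - f y) / (x - y) = - (a / h)" unfolding a_def h_def by (simp add: minus_divide_right)
    then have "a / h > M" using qx by linarith
    then have aM: "a > M * h" using hpos by (simp add: pos_less_divide_eq)
    have Mpos: "M > 0" unfolding M_def using c by simp
    have apos: "a > 0" using aM Mpos hpos by (smt (verit) mult_pos_pos)
    have "dist (f x) (f y) < \<eta>" using R x by simp
    then have aeta: "a < \<eta>" unfolding a_def dist_real_def by simp
    define \<delta> where "\<delta> = 2 * a / t"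
    have dpos: "\<delta> > 0" unfolding \<delta>_def using apos tpos by simp
    have td: "t * \<delta> = 2 * a" unfolding \<delta>_def using tpos by simp
    have "t * \<delta> < t * min \<delta>0 \<epsilon>" using td aeta unfolding \<eta>_def by simp
    then have dlt: "\<delta> < min \<delta>0 \<epsilon>" using tpos by simp
    have "measure lebesgue (G t \<delta>) / \<delta> > 1/2" using D0 dpos dlt by simp
    then have mG: "measure lebesgue (G t \<delta>) > \<delta> / 2" using dpos by (simp add: pos_less_divide_eq field_simps)
    have Gsets: "G t \<delta> \<in> sets lebesgue"
    proof (rule ccontr)
      assume "G t \<delta> \<notin> sets lebesgue"
      then have "measure lebesgue (G t \<delta>) = 0" by (rule measure_notin_sets)
      with mG dpos show False by simp
    qed
    obtain s where s: "s \<in> G t \<delta>" "s \<ge> y + \<delta> / 2"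
    proof (rule ccontr)
      assume "\<not> thesis"
      then have "G t \<delta> \<subseteq> {y..y + \<delta>/2}" using that unfolding G_def by force
      then have "measure lebesgue (G t \<delta>) \<le> measure lebesgue {y..y + \<delta>/2}"
        by (intro measure_mono_fmeasurable Gsets) auto
      also have "\<dots> = \<delta> / 2" using dpos by simp
      finally show False using mG by simp
    qed
    have sI: "s \<in> I" and sy: "y < s" "s < y + \<delta>" and sq: "t \<le> (f s - f y) / (s - y)"
      using s(1) unfolding G_def by auto
    have "t * (s - y) \<le> f s - f y" using sq sy by (simp add: pos_le_divide_eq)
    moreover have "t * (\<delta> / 2) \<le> t * (s - y)" using s(2) tpos by (intro mult_left_mono) auto
    ultimately have "a \<le> f s - f y" using td by simp
    then have fxs: "f x \<le> f s" unfolding a_def by simp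
    have sub: "{y..s} \<subseteq> I" using Iint[OF assms(4) sI] by auto
    have "continuous_on {y..s} f" using continuous_on_subset[OF assms(3) sub] .
    from IVT'[of f y "f x" s, OF _ fxs _ this] apos sy
    obtain z where z: "y \<le> z" "z \<le> s" "f z = f x" unfolding a_def by auto
    have zy: "z \<noteq> y" using z(3) apos unfolding a_def by auto
    have zI: "z \<in> I" using sub z by auto
    have "Dp x y \<le> c * Dp x z"
      using H[of x z] x zI z zy sy dlt by (auto simp: dist_real_def)
    moreover have "a \<le> Dp x y" using dist_psi_bounds(2)[where a=x and b=y and f=f] unfolding Dp_def a_def by simp
    moreover have "Dp x z \<le> z - x" using dist_psi_bounds(3)[where a=x and b=z and f=f] z x unfolding Dp_def by simp
    ultimately have "a \<le> c * (z - x)" using c by (smt (verit) mult_left_mono)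
    also have "\<dots> \<le> c * (\<delta> + h)" using c z sy unfolding h_def by (intro mult_left_mono) auto
    also have "\<dots> = c * \<delta> + c * h" by (simp add: algebra_simps)
    finally have fin: "a \<le> c * \<delta> + c * h" .
    have "4 * c * \<delta> < t * \<delta>" using tc dpos by (intro mult_strict_right_mono) auto
    then have "(c * \<delta>) * 4 < 2 * a" using td by (simp add: algebra_simps)
    then have cd: "c * \<delta> < a / 2" by linarith
    have "(2 * c) * h < M * h" unfolding M_def using hpos by simp
    then have ch: "c * h < a / 2" using aM by simp
    from fin cd ch show False by simp
  qed
qed

end
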